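(* Let $\Theta$ be a parameter space, $p(\theta)$ a prior on $\Theta$, $D=\{(y_i,x_i)\}_{i=1}^n$ a fixed dataset with likelihood $p(D\mid\theta)=\prod_{i=1}^n p(y_i\mid x_i,\theta)$, and $\nu$ the data-generating distribution on $\mathcal Y\times\mathcal X$. For $\lambda>0$ let $p_\lambda(\theta\mid D)\propto p(D\mid\theta)^\lambda p(\theta)$ be the tempered posterior, let $B(\rho)=\mathbb{E}_{(y,x)\sim\nu}\big[-\ln \mathbb{E}_{\theta\sim\rho}[p(y\mid x,\theta)]\big]$ be the Bayes loss and $\hat G(\rho,D)=\mathbb{E}_{\theta\sim\rho}[-\ln p(D\mid\theta)]$ the empirical Gibbs loss of a distribution $\rho$ on $\Theta$. If $\frac{d}{d\lambda}B(p_\lambda)\big|_{\lambda=1}<0$ (the cold posterior effect), then \[ \hat G(p_{1},D) > \min_{\theta} -\ln p(D\mid\theta). \]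
   Context: The tempered posterior is assumed to be a proper distribution. $p_1$ denotes $p_\lambda$ at $\lambda=1$, i.e. the standard Bayesian posterior. *)

theory Defs
  imports "HOL-Probability.Probability"
begin

definition data_lik :: "('y \<Rightarrow> 'x \<Rightarrow> 'th \<Rightarrow> real) \<Rightarrow> nat \<Rightarrow> (nat \<Rightarrow> 'y) \<Rightarrow> (nat \<Rightarrow> 'x) \<Rightarrow> 'th \<Rightarrow> real"
  where "data_lik lik n ys xs \<theta> = (\<Prod>i<n. lik (ys i) (xs i) \<theta>)"

definition temp_norm :: "'th measure \<Rightarrow> ('th \<Rightarrow> real) \<Rightarrow> real \<Rightarrow> real"
  where "temp_norm prior L l = (\<integral>\<theta>. L \<theta> powr l \<partial>prior)"

definition tempered_post :: "'th measure \<Rightarrow> ('th \<Rightarrow> real) \<Rightarrow> real \<Rightarrow> 'th measure"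
  where "tempered_post prior L l =
     density prior (\<lambda>\<theta>. ennreal (L \<theta> powr l / temp_norm prior L l))"

definition bayes_loss :: "('y \<times> 'x) measure \<Rightarrow> ('y \<Rightarrow> 'x \<Rightarrow> 'th \<Rightarrow> real) \<Rightarrow> 'th measure \<Rightarrow> real"
  where "bayes_loss \<nu> lik \<rho> = (\<integral>(y, x). - ln (\<integral>\<theta>. lik y x \<theta> \<partial>\<rho>) \<partial>\<nu>)"

definition emp_gibbs_loss :: "('th \<Rightarrow> real) \<Rightarrow> 'th measure \<Rightarrow> real"
  where "emp_gibbs_loss L \<rho> = (\<integral>\<theta>. - ln (L \<theta>) \<partial>\<rho>)"

definition neg_log_lik :: "('th \<Rightarrow> real) \<Rightarrow> 'th \<Rightarrow> ereal"
  where "neg_log_lik L \<theta> = (if L \<theta> = 0 then \<infinity> else ereal (- ln (L \<theta>)))"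

end

theory Submission
  imports Defs
begin

theorem proposition2p2:
  fixes prior :: "'th measure"
    and \<nu> :: "('y \<times> 'x) measure"
    and lik :: "'y \<Rightarrow> 'x \<Rightarrow> 'th \<Rightarrow> real"
    and n :: nat and ys :: "nat \<Rightarrow> 'y" and xs :: "nat \<Rightarrow> 'x"
    and d :: real
  defines "L \<equiv> data_lik lik n ys xs"
  assumes prior: "prob_space prior"
    and nu: "prob_space \<nu>"
    and lik_nonneg: "\<And>y x \<theta>. lik y x \<theta> \<ge> 0"
    and lik_meas: "\<And>y x. (\<lambda>\<theta>. lik y x \<theta>) \<in> borel_measurable prior"
    and proper: "\<And>l. l > 0 \<Longrightarrow>
        integrable prior (\<lambda>\<theta>. L \<theta> powr l) \<and> temp_norm prior L l > 0"
    and gibbs_defined: "integrable (tempered_post prior L 1) (\<lambda>\<theta>. - ln (L \<theta>))"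
    and cold: "((\<lambda>l. bayes_loss \<nu> lik (tempered_post prior L l)) has_real_derivative d) (at 1)"
    and neg: "d < 0"
  shows "ereal (emp_gibbs_loss L (tempered_post prior L 1))
           > (INF \<theta>\<in>space prior. neg_log_lik L \<theta>)"
proof -
  interpret P: prob_space prior by (rule prior)
  have Lnn: "L \<theta> \<ge> 0" for \<theta> unfolding L_def data_lik_def by (intro prod_nonneg lik_nonneg)
  have Lm[measurable]: "L \<in> borel_measurable prior"
    unfolding L_def data_lik_def by (intro borel_measurable_prod lik_meas)
  define Z1 where "Z1 = temp_norm prior L 1"
  have Z1: "Z1 > 0" "integrable prior L"
    using proper[of 1] Lnn by (auto simp: Z1_def)
  have Z1i: "Z1 = integral\<^sup>L prior L" using Lnn by (simp add: Z1_def temp_norm_def)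
  define p1 where "p1 = tempered_post prior L 1"
  have p1d: "p1 = density prior (\<lambda>\<theta>. ennreal (L \<theta> / Z1))"
    using Lnn by (simp add: p1_def tempered_post_def Z1_def)
  have dm[measurable]: "(\<lambda>\<theta>. ennreal (L \<theta> / Z1)) \<in> borel_measurable prior" by measurable
  have pos_iff: "(0 < ennreal (L \<theta> / Z1)) = (L \<theta> > 0)" for \<theta>
    using Lnn[of \<theta>] Z1(1) by (auto simp: zero_less_divide_iff)
  have "prob_space p1"
  proof
    have "emeasure p1 (space p1) = (\<integral>\<^sup>+ x. ennreal (L x / Z1) * indicator (space prior) x \<partial>prior)"
      unfolding p1d by (simp add: emeasure_density)
    also have "\<dots> = (\<integral>\<^sup>+ x. ennreal (L x / Z1) \<partial>prior)"
      by (intro nn_integral_cong) auto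
    also have "\<dots> = ennreal (integral\<^sup>L prior (\<lambda>x. L x / Z1))"
      using Z1 Lnn by (intro nn_integral_eq_integral) auto
    also have "\<dots> = 1" using Z1 Z1i by simp
    finally show "emeasure p1 (space p1) = 1" .
  qed
  then interpret Q: prob_space p1 .
  define m where "m = (INF \<theta>\<in>space prior. neg_log_lik L \<theta>)"
  have "\<exists>\<theta>\<in>space prior. L \<theta> > 0"
  proof (rule ccontr)
    assume "\<not> ?thesis"
    then have "\<forall>\<theta>\<in>space prior. L \<theta> = 0" using Lnn by (metis less_eq_real_def)
    then have "integral\<^sup>L prior L = integral\<^sup>L prior (\<lambda>_. 0)" by (intro Bochner_Integration.integral_cong) auto
    then show False using Z1 Z1i by simp
  qed
  then obtain \<theta>0 where t0: "\<theta>0 \<in> space prior" "L \<theta>0 > 0" by blast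
  have "m \<le> neg_log_lik L \<theta>0" unfolding m_def by (rule INF_lower[OF t0(1)])
  then have mfin: "m \<noteq> \<infinity>" using t0 by (auto simp: neg_log_lik_def)
  define G where "G = emp_gibbs_loss L p1"
  show ?thesis
  proof (cases m)
    case MInf
    then show ?thesis by (simp add: m_def[symmetric] p1_def[symmetric])
  next
    case PInf with mfin show ?thesis by simp
  next
    case (real r)
    show ?thesis
    proof (rule ccontr)
      assume "\<not> ?thesis"
      then have Gle: "G \<le> r" using real by (simp add: m_def[symmetric] p1_def[symmetric] G_def)
      have lowp: "r \<le> - ln (L \<theta>)" if "\<theta> \<in> space prior" "L \<theta> > 0" for \<theta>
      proof -
        have "m \<le> neg_log_lik L \<theta>" unfolding m_def by (rule INF_lower[OF that(1)])
        then show ?thesis using real that(2) by (simp add: neg_log_lik_def)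
      qed
      have AElow: "AE \<theta> in p1. 0 \<le> - ln (L \<theta>) - r"
        unfolding p1d AE_density[OF dm] pos_iff using lowp by (intro AE_I2) auto
      have gi: "integrable p1 (\<lambda>\<theta>. - ln (L \<theta>))" using gibbs_defined p1_def by simp
      have int2: "integrable p1 (\<lambda>\<theta>. - ln (L \<theta>) - r)" using gi by auto
      have "integral\<^sup>L p1 (\<lambda>\<theta>. - ln (L \<theta>) - r) = G - r"
        using gi by (simp add: G_def emp_gibbs_loss_def Bochner_Integration.integral_diff Q.prob_space)
      moreover have "integral\<^sup>L p1 (\<lambda>\<theta>. - ln (L \<theta>) - r) \<ge> 0"
        using AElow by (intro integral_nonneg_AE)
      ultimately have "integral\<^sup>L p1 (\<lambda>\<theta>. - ln (L \<theta>) - r) = 0" using Gle by simp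
      then have "AE \<theta> in p1. - ln (L \<theta>) - r = 0"
        using integral_nonneg_eq_0_iff_AE[OF int2 AElow] by simp
      then have AEeq: "AE \<theta> in prior. L \<theta> > 0 \<longrightarrow> L \<theta> = exp (- r)"
        unfolding p1d AE_density[OF dm] pos_iff
        by eventually_elim (metis add.inverse_inverse diff_eq_eq exp_ln_iff add_0)
      define E where "E = exp (- r)"
      have Epos: "E > 0" by (simp add: E_def)
      have post_eq: "tempered_post prior L l = p1" if l: "l > 0" for l
      proof -
        define K where "K = E powr (l - 1)"
        have Kpos: "K > 0" using Epos by (simp add: K_def)
        have AE1: "AE \<theta> in prior. L \<theta> powr l = K * L \<theta>"
          using AEeq
        proof eventually_elim
          case (elim \<theta>)
          show ?case
          proof (cases "L \<theta> > 0")
            case True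
            then have "L \<theta> = E" using elim E_def by simp
            have "E powr (l - 1) * E powr 1 = E powr l"
              unfolding powr_add[symmetric] by simp
            then show ?thesis using Epos \<open>L \<theta> = E\<close>
              by (simp add: K_def)
          next
            case False
            then have "L \<theta> = 0" using Lnn[of \<theta>] by simp
            then show ?thesis by simp
          qed
        qed
        have "temp_norm prior L l = integral\<^sup>L prior (\<lambda>\<theta>. K * L \<theta>)"
          unfolding temp_norm_def by (intro integral_cong_AE AE1) auto
        also have "\<dots> = K * Z1" using Z1i by simp
        finally have Zl: "temp_norm prior L l = K * Z1" .
        have "tempered_post prior L l = density prior (\<lambda>\<theta>. ennreal (L \<theta> / Z1))"
          unfolding tempered_post_def Zl
        proof (intro density_cong)
          show "AE x in prior. ennreal (L x powr l / (K * Z1)) = ennreal (L x / Z1)"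
            using AE1 by eventually_elim (use Kpos in simp)
        qed auto
        then show ?thesis using p1d by simp
      qed
      define f where "f = (\<lambda>l. bayes_loss \<nu> lik (tempered_post prior L l))"
      have "((\<lambda>l. f 1) has_real_derivative d) (at 1)"
      proof (rule has_field_derivative_transform_within_open[of f d 1 "{0<..}"])
        show "(f has_real_derivative d) (at 1)" using cold f_def by simp
        show "f x = f 1" if "x \<in> {0<..}" for x
          using that post_eq[of x] post_eq[of 1] by (simp add: f_def)
      qed auto
      moreover have "((\<lambda>l. f 1) has_real_derivative 0) (at 1)" by simp
      ultimately have "d = 0" by (rule DERIV_unique)
      then show False using neg by simp
    qed
  qed
qed

end
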